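(* There is an absolute constant $C_3$ such that for all $p\in(0,0.1)$, with $q=-\log(1-p)$ and $B=\lfloor q^{-1}\log q^{-1}\rfloor$, every positive integer $a\le B$ satisfies $$e^{2g(aq)}\le \frac{C_3}{aq}\log q^{-1}.$$
   Context: $\beta(u)=\frac{u+\sqrt{u(4-3u)}}{2}$ and $g(z)=-\log\beta(1-e^{-z})$ for $z>0$. *)

theory Defs
  imports "HOL-Analysis.Analysis"
begin

definition beta :: "real \<Rightarrow> real" where
  "beta u = (u + sqrt (u * (4 - 3 * u))) / 2"

definition g :: "real \<Rightarrow> real" where
  "g z = - ln (beta (1 - exp (- z)))"

end

theory Submission
  imports Defs
begin

lemma key:
  fixes z L :: real
  assumes z: "0 < z" and L1: "1 \<le> L" and zL: "z \<le> L"
  shows "exp (2 * g z) \<le> 8 / z * L"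
proof -
  define u where "u = 1 - exp (- z)"
  have ez: "exp (- z) = 1 / exp z" by (simp add: exp_minus field_simps)
  have ex: "exp z \<ge> 1 + z" by (rule exp_ge_add_one_self)
  have u1: "u \<le> 1" unfolding u_def by simp
  have umin: "u \<ge> min z 1 / 2"
  proof (cases "z \<le> 1")
    case True
    have "exp (- z) \<le> 1 / (1 + z)" unfolding ez using ex z
      by (simp add: frac_le)
    also have "\<dots> \<le> 1 - z / 2" using True z by (simp add: field_simps)
    finally show ?thesis using True unfolding u_def by simp
  next
    case False
    have "exp z \<ge> 2" using ex False by linarith
    then have "exp (- z) \<le> 1/2" unfolding ez by simp
    then show ?thesis using False unfolding u_def by simp
  qed
  have upos: "u > 0" using umin z by simp
  have b: "beta u \<ge> sqrt u / 2"
  proof -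
    have "sqrt (u * (4 - 3*u)) \<ge> sqrt u" using u1 upos
      using mult_left_mono[of 1 "4 - 3*u" u] by (intro real_sqrt_le_mono) simp
    then have "sqrt u \<le> u + sqrt (u * (4 - 3*u))" using upos by linarith
    then show ?thesis unfolding beta_def by (simp add: divide_right_mono)
  qed
  have bpos: "beta u > 0" using b upos using real_sqrt_gt_zero[of u] by linarith
  have e1: "exp (- ln (beta u)) = 1 / beta u" using bpos by (simp add: exp_minus inverse_eq_divide)
  have "exp (2 * g z) = exp (- ln (beta u)) * exp (- ln (beta u))"
    unfolding g_def u_def[symmetric] mult_2 exp_add[symmetric] by simp
  also have "\<dots> = 1 / (beta u)^2" unfolding e1 power2_eq_square by simp
  also have "\<dots> \<le> 1 / (sqrt u / 2)^2"
  proof -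
    have s0: "0 \<le> sqrt u / 2" using upos by simp
    have "(sqrt u / 2)^2 \<le> (beta u)^2" using power_mono[OF b s0, of 2] .
    moreover have "0 < (sqrt u / 2)^2" using upos by simp
    ultimately show ?thesis using frac_le[of 1 1 "(sqrt u / 2)^2" "(beta u)^2"] by linarith
  qed
  also have "\<dots> = 4 / u" using upos by (simp add: power_divide)
  also have "\<dots> \<le> 4 / (min z 1 / 2)"
  proof -
    have "0 < min z 1 / 2" using z by simp
    then show ?thesis using umin frac_le[of 4 4 "min z 1 / 2" u] by linarith
  qed
  also have "\<dots> \<le> 8 / z * L"
  proof (cases "z \<le> 1")
    case True
    then show ?thesis using z L1 by (simp add: field_simps)
  next
    case False
    then show ?thesis using z zL by (simp add: field_simps)
  qed
  finally show ?thesis .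
qed

theorem lemma11:
  "\<exists>C3::real. \<forall>p::real. 0 < p \<and> p < 0.1 \<longrightarrow>
     (let q = - ln (1 - p); B = \<lfloor>(1 / q) * ln (1 / q)\<rfloor> in
       \<forall>a::nat. 0 < a \<and> int a \<le> B \<longrightarrow>
         exp (2 * g (real a * q)) \<le> C3 / (real a * q) * ln (1 / q))"
proof (intro exI[of _ 8] allI impI)
  fix p :: real
  assume p: "0 < p \<and> p < 0.1"
  define q where "q = - ln (1 - p)"
  have qpos: "q > 0" unfolding q_def using p by simp
  have "- p - 2*p^2 \<le> ln (1 - p)" using p using ln_one_minus_pos_lower_bound[of p] by auto
  then have "q \<le> p + 2*p^2" unfolding q_def by simp
  also have "\<dots> < 1/8"
  proof -
    have "p * p \<le> p * 0.1" using p by (intro mult_left_mono) auto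
    then show ?thesis using p unfolding power2_eq_square by linarith
  qed
  finally have q9: "q < 1/8" .
  have "exp 1 \<le> (3::real)" using exp_le by linarith
  have L1: "1 \<le> ln (1/q)"
  proof -
    have "q * exp 1 \<le> q * 3" using qpos \<open>exp 1 \<le> 3\<close> by (intro mult_left_mono) auto
    then have "q * exp 1 < 1" using q9 qpos by linarith
    then have "exp 1 * q < 1" by (simp add: mult.commute)
    then have "exp 1 < 1/q" using qpos by (simp add: pos_less_divide_eq)
    then show ?thesis using qpos by (simp add: ln_ge_iff less_imp_le)
  qed
  show "let q = - ln (1 - p); B = \<lfloor>(1 / q) * ln (1 / q)\<rfloor> in
       \<forall>a::nat. 0 < a \<and> int a \<le> B \<longrightarrow>
         exp (2 * g (real a * q)) \<le> 8 / (real a * q) * ln (1 / q)"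
    unfolding Let_def q_def[symmetric]
  proof (intro allI impI)
    fix a :: nat
    assume a: "0 < a \<and> int a \<le> \<lfloor>(1 / q) * ln (1 / q)\<rfloor>"
    then have "real a \<le> (1/q) * ln (1/q)"
      using le_floor_iff[of "int a" "(1/q) * ln (1/q)"] by simp
    then have "real a * q \<le> ln (1/q)" using qpos by (simp add: field_simps)
    moreover have "0 < real a * q" using a qpos by simp
    ultimately show "exp (2 * g (real a * q)) \<le> 8 / (real a * q) * ln (1 / q)"
      using key[OF _ L1] by blast
  qed
qed

end
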